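(* Let $g\in\mathscr H$. Two solutions $f,h\in\mathscr H$ of $L(y)=g$ are equal if and only if $f_\gamma=h_\gamma$ for all $\gamma\in-\mathcal S(L)$.
   Context: Let $\mathbf K$ be a field and $\ell\geq 2$ an integer. Let $\mathscr H$ be the field of Hahn series $f=\sum_{\gamma\in\mathbb Q}f_\gamma z^\gamma$ with coefficients in $\mathbf K$ and well-ordered support. Let $\phi_\ell$ be the automorphism $f(z)\mapsto f(z^\ell)$. Let $L=a_n\phi_\ell^n+\dots+a_0$ with $n\geq1$, $a_i\in\mathbf K[z]$, $a_0a_n\neq0$, acting by $L(f)=\sum_i a_i f(z^{\ell^i})$. The Newton polygon of $L$ is the convex hull of $\{(\ell^i,j): 0\le i\le n,\ j\geq\operatorname{val} a_i\}\subset\mathbb R^2$ (where $\operatorname{val} a_i$ is the $z$-adic valuation); the slopes of its non-vertical edges form the set $\mathcal S(L)$, and $-\mathcal S(L)=\{-\mu:\mu\in\mathcal S(L)\}$. *)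

theory Defs
  imports "HOL-Analysis.Analysis" "HOL-Computational_Algebra.Polynomial"
begin

text \<open>Hahn series over a field K with exponents in the rationals, represented by
their coefficient function; the support must be well-ordered.\<close>

definition hsupp :: "(rat \<Rightarrow> 'k::zero) \<Rightarrow> rat set" where
  "hsupp f = {\<gamma>. f \<gamma> \<noteq> 0}"

definition is_hahn :: "(rat \<Rightarrow> 'k::zero) \<Rightarrow> bool" where
  "is_hahn f \<longleftrightarrow> wf {(x, y). x \<in> hsupp f \<and> y \<in> hsupp f \<and> x < y}"

text \<open>The i-th power of the Mahler operator: f(z) \<mapsto> f(z^(l^i)).
Coefficient of z^\<gamma> in f(z^(l^i)) is f_(\<gamma>/l^i).\<close>
definition mahler_pow :: "nat \<Rightarrow> nat \<Rightarrow> (rat \<Rightarrow> 'k) \<Rightarrow> (rat \<Rightarrow> 'k)" where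
  "mahler_pow l i f = (\<lambda>\<gamma>. f (\<gamma> / of_nat (l ^ i)))"

definition poly_hmult :: "'k::comm_semiring_1 poly \<Rightarrow> (rat \<Rightarrow> 'k) \<Rightarrow> (rat \<Rightarrow> 'k)" where
  "poly_hmult p f = (\<lambda>\<gamma>. \<Sum>j\<le>degree p. coeff p j * f (\<gamma> - of_nat j))"

definition mahler_op :: "nat \<Rightarrow> nat \<Rightarrow> (nat \<Rightarrow> 'k::comm_semiring_1 poly) \<Rightarrow> (rat \<Rightarrow> 'k) \<Rightarrow> (rat \<Rightarrow> 'k)" where
  "mahler_op l n a f = (\<lambda>\<gamma>. \<Sum>i\<le>n. poly_hmult (a i) (mahler_pow l i f) \<gamma>)"

text \<open>Newton polygon: convex hull of {(l^i, j) : 0 \<le> i \<le> n, j \<ge> val a_i}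
(terms with a_i = 0 have valuation +\<infinity> and contribute no points).\<close>
definition newton_polygon :: "nat \<Rightarrow> nat \<Rightarrow> (nat \<Rightarrow> 'k::idom poly) \<Rightarrow> (real \<times> real) set" where
  "newton_polygon l n a = convex hull
     {(real (l ^ i), j) | i j. i \<le> n \<and> a i \<noteq> 0 \<and> real (order 0 (a i)) \<le> j}"

definition newton_slopes :: "nat \<Rightarrow> nat \<Rightarrow> (nat \<Rightarrow> 'k::idom poly) \<Rightarrow> real set" where
  "newton_slopes l n a = {\<mu>. \<exists>E. E face_of newton_polygon l n a \<and> aff_dim E = 1 \<and>
      (\<exists>p\<in>E. \<exists>q\<in>E. fst p \<noteq> fst q \<and> \<mu> = (snd q - snd p) / (fst q - fst p))}"

end

theory Submission
  imports Defs
begin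

lemma order0_coeff:
  fixes p :: "'k::field poly"
  assumes "p \<noteq> 0"
  shows "\<And>j. j < order 0 p \<Longrightarrow> coeff p j = 0" and "coeff p (order 0 p) \<noteq> 0"
proof -
  obtain q where q: "p = [:0,1:] ^ order 0 p * q" using order_1[of 0 p] by (auto elim: dvdE)
  have x: "[:0,1:] ^ k = (monom 1 k :: 'k poly)" for k by (simp add: monom_altdef)
  show "\<And>j. j < order 0 p \<Longrightarrow> coeff p j = 0"
    by (subst q) (simp add: x coeff_monom_mult)
  show "coeff p (order 0 p) \<noteq> 0"
  proof
    assume c: "coeff p (order 0 p) = 0"
    have "coeff q 0 = 0" using c by (subst (asm) q) (simp add: x coeff_monom_mult)
    then have "poly q 0 = 0" by (simp add: poly_0_coeff_0)
    then have "[:-0,1:] dvd q" by (metis minus_zero poly_eq_0_iff_dvd)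
    then obtain r where r: "q = [:-0,1:] * r" by (auto elim: dvdE)
    have "p = [:-0,1:] ^ Suc (order 0 p) * r"
      using q r by (metis minus_zero mult.assoc power_Suc2)
    then have "[:-0,1:] ^ Suc (order 0 p) dvd p" by (metis dvd_triv_left)
    with order_2[OF assms] show False by blast
  qed
qed

lemma hahn_least:
  assumes "is_hahn f" "Q \<subseteq> hsupp f" "Q \<noteq> {}"
  shows "\<exists>z\<in>Q. \<forall>y\<in>Q. z \<le> y"
proof -
  obtain x where "x \<in> Q" using assms(3) by blast
  from wfE_min[OF assms(1)[unfolded is_hahn_def] this]
  obtain z where "z \<in> Q" "\<And>y. (y, z) \<in> {(x, y). x \<in> hsupp f \<and> y \<in> hsupp f \<and> x < y} \<Longrightarrow> y \<notin> Q"
    by blast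
  then show ?thesis using assms(2) by (metis (mono_tags, lifting) case_prodI mem_Collect_eq not_le subsetD)
qed

lemma hahn_least2:
  assumes "is_hahn f" "is_hahn h" "Q \<subseteq> hsupp f \<union> hsupp h" "Q \<noteq> {}"
  shows "\<exists>z\<in>Q. \<forall>y\<in>Q. z \<le> y"
proof (cases "Q \<inter> hsupp f = {}")
  case True
  then show ?thesis using hahn_least[OF assms(2), of Q] assms by blast
next
  case F: False
  obtain a where a: "a \<in> Q \<inter> hsupp f" "\<forall>y\<in>Q \<inter> hsupp f. a \<le> y"
    using hahn_least[OF assms(1), of "Q \<inter> hsupp f"] F by blast
  show ?thesis
  proof (cases "Q \<inter> hsupp h = {}")
    case True
    then show ?thesis using a assms(3) by blast
  next
    case False
    obtain b where b: "b \<in> Q \<inter> hsupp h" "\<forall>y\<in>Q \<inter> hsupp h. b \<le> y"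
      using hahn_least[OF assms(2), of "Q \<inter> hsupp h"] False by blast
    show ?thesis
      apply (rule bexI[of _ "min a b"])
      using a b assms(3) unfolding Ball_def min_def by (auto, (smt (verit) IntI UnE order_trans subsetD linorder_linear)+)
  qed
qed

lemma mahler_op_diff:
  "mahler_op l n a (\<lambda>\<gamma>. f \<gamma> - h \<gamma>) = (\<lambda>\<gamma>. mahler_op l n a f \<gamma> - mahler_op l n a (h :: rat \<Rightarrow> 'k::field) \<gamma>)"
  by (simp add: mahler_op_def poly_hmult_def mahler_pow_def sum_subtractf right_diff_distrib)

lemma term_at_min:
  fixes p :: "'k::field poly" and L :: nat and d :: "rat \<Rightarrow> 'k"
  assumes least: "\<forall>y. d y \<noteq> 0 \<longrightarrow> g0 \<le> y" and L: "L > 0"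
    and m_le: "p \<noteq> 0 \<Longrightarrow> m \<le> of_nat (order 0 p) + of_nat L * g0"
  shows "(\<Sum>j\<le>degree p. coeff p j * d ((m - of_nat j) / of_nat L)) =
     (if p \<noteq> 0 \<and> m = of_nat (order 0 p) + of_nat L * g0 then coeff p (order 0 p) * d g0 else 0)"
proof (cases "p = 0")
  case True then show ?thesis by simp
next
  case False
  define v where "v = order 0 p"
  have vdeg: "v \<le> degree p" using order_degree[OF False] by (simp add: v_def)
  have tm: "coeff p j * d ((m - of_nat j) / of_nat L) =
     (if j = v then (if m = of_nat v + of_nat L * g0 then coeff p v * d g0 else 0) else 0)" for j
  proof (cases "j < v")
    case True
    then show ?thesis using order0_coeff(1)[OF False, of j] by (simp add: v_def)
  next
    case ge: False
    show ?thesis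
    proof (cases "j = v \<and> m = of_nat v + of_nat L * g0")
      case True
      then show ?thesis using L by simp
    next
      case nt: False
      have mle: "m \<le> of_nat v + of_nat L * g0" using m_le False by (simp add: v_def)
      have "m - of_nat j < of_nat L * g0"
      proof -
        have "(of_nat v :: rat) \<le> of_nat j" using ge by simp
        moreover have "j \<noteq> v \<or> m \<noteq> of_nat v + of_nat L * g0" using nt by blast
        moreover have "j \<noteq> v \<Longrightarrow> (of_nat v :: rat) < of_nat j" using ge by simp
        ultimately show ?thesis using mle by linarith
      qed
      then have "(m - of_nat j) / of_nat L < g0" using L by (simp add: pos_divide_less_eq mult.commute)
      then have "d ((m - of_nat j) / of_nat L) = 0" using least by (meson not_le)
      then show ?thesis using nt by auto
    qed
  qed
  have "(\<Sum>j\<le>degree p. coeff p j * d ((m - of_nat j) / of_nat L)) =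
     (\<Sum>j\<le>degree p. (if j = v then (if m = of_nat v + of_nat L * g0 then coeff p v * d g0 else 0) else 0))"
    by (simp only: tm)
  also have "\<dots> = (if m = of_nat v + of_nat L * g0 then coeff p v * d g0 else 0)"
    using vdeg by (simp add: sum.delta')
  finally show ?thesis using False by (simp add: v_def)
qed

theorem mainTheorem5:
  fixes l n :: nat and a :: "nat \<Rightarrow> 'k::field poly" and g f h :: "rat \<Rightarrow> 'k"
  assumes "l \<ge> 2" and "n \<ge> 1"
    and "a 0 \<noteq> 0" and "a n \<noteq> 0"
    and "is_hahn g" and "is_hahn f" and "is_hahn h"
    and "mahler_op l n a f = g" and "mahler_op l n a h = g"
  shows "f = h \<longleftrightarrow>
    (\<forall>\<gamma>::rat. real_of_rat \<gamma> \<in> uminus ` newton_slopes l n a \<longrightarrow> f \<gamma> = h \<gamma>)"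
proof
  assume "f = h" then show "\<forall>\<gamma>::rat. real_of_rat \<gamma> \<in> uminus ` newton_slopes l n a \<longrightarrow> f \<gamma> = h \<gamma>" by simp
next
  assume H: "\<forall>\<gamma>::rat. real_of_rat \<gamma> \<in> uminus ` newton_slopes l n a \<longrightarrow> f \<gamma> = h \<gamma>"
  show "f = h"
  proof (rule ccontr)
    assume "f \<noteq> h"
    define d where "d = (\<lambda>\<gamma>. f \<gamma> - h \<gamma>)"
    have ne: "hsupp d \<noteq> {}" using \<open>f \<noteq> h\<close> by (auto simp: hsupp_def d_def)
    have sub: "hsupp d \<subseteq> hsupp f \<union> hsupp h" by (auto simp: hsupp_def d_def)
    obtain g0 where g0: "g0 \<in> hsupp d" "\<forall>y\<in>hsupp d. g0 \<le> y"
      using hahn_least2[OF assms(6,7) sub ne] by blast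
    have least: "\<forall>y. d y \<noteq> 0 \<longrightarrow> g0 \<le> y" using g0 by (simp add: hsupp_def)
    have dg0: "d g0 \<noteq> 0" using g0 by (simp add: hsupp_def)
    have Ld: "mahler_op l n a d m = 0" for m
      using assms(8,9) by (simp add: d_def mahler_op_diff)
    define J where "J = {i. i \<le> n \<and> a i \<noteq> 0}"
    define w where "w i = (of_nat (order 0 (a i)) + of_nat (l^i) * g0 :: rat)" for i
    define m where "m = Min (w ` J)"
    have finJ: "finite J" by (simp add: J_def)
    have J0: "0 \<in> J" using assms(3) by (simp add: J_def)
    have m_le: "i \<in> J \<Longrightarrow> m \<le> w i" for i using finJ by (simp add: m_def)
    have m_in: "m \<in> w ` J" unfolding m_def using finJ J0 by (intro Min_in) auto
    define I where "I = {i\<in>{..n}. a i \<noteq> 0 \<and> m = w i}"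
    define c where "c i = coeff (a i) (order 0 (a i))" for i
    have Lpos: "l ^ i > 0" for i using assms(1) by simp
    have eq: "mahler_op l n a d m = (\<Sum>i\<in>I. c i * d g0)"
    proof -
      have "mahler_op l n a d m = (\<Sum>i\<le>n. poly_hmult (a i) (mahler_pow l i d) m)"
        by (simp add: mahler_op_def)
      also have "\<dots> = (\<Sum>i\<le>n. (if a i \<noteq> 0 \<and> m = w i then c i * d g0 else 0))"
      proof (rule sum.cong[OF refl])
        fix i assume i: "i \<in> {..n}"
        have "poly_hmult (a i) (mahler_pow l i d) m =
           (\<Sum>j\<le>degree (a i). coeff (a i) j * d ((m - of_nat j) / of_nat (l ^ i)))"
          by (simp add: poly_hmult_def mahler_pow_def)
        also have "\<dots> = (if a i \<noteq> 0 \<and> m = of_nat (order 0 (a i)) + of_nat (l ^ i) * g0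
               then coeff (a i) (order 0 (a i)) * d g0 else 0)"
          by (rule term_at_min[OF least Lpos]) (use m_le i in \<open>auto simp: J_def w_def\<close>)
        finally show "poly_hmult (a i) (mahler_pow l i d) m = (if a i \<noteq> 0 \<and> m = w i then c i * d g0 else 0)"
          by (simp add: w_def c_def)
      qed
      also have "\<dots> = (\<Sum>i\<in>I. c i * d g0)"
        unfolding I_def by (rule sum.inter_filter[symmetric]) simp
      finally show ?thesis .
    qed
    have two: "\<exists>i k. i \<in> I \<and> k \<in> I \<and> i \<noteq> k"
    proof (rule ccontr)
      assume not: "\<not> (\<exists>i k. i \<in> I \<and> k \<in> I \<and> i \<noteq> k)"
      obtain i0 where i0: "i0 \<in> J" "m = w i0" using m_in by blast
      have "i0 \<in> I" using i0 by (auto simp: I_def J_def)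
      then have "I = {i0}" using not by blast
      then have "mahler_op l n a d m = c i0 * d g0" using eq by simp
      moreover have "c i0 \<noteq> 0" using i0 order0_coeff(2)[of "a i0"] by (auto simp: c_def J_def)
      ultimately show False using Ld dg0 by simp
    qed
    then obtain i k where ik: "i \<in> I" "k \<in> I" "i \<noteq> k" by blast
    define gr where "gr = real_of_rat g0"
    define mr where "mr = real_of_rat m"
    define P where "P = newton_polygon l n a"
    define E where "E = P \<inter> {x. (gr, 1) \<bullet> x = mr}"
    have wr: "real_of_rat (w j) = real (order 0 (a j)) + real (l ^ j) * gr" for j
      by (simp add: w_def gr_def of_rat_add of_rat_mult of_rat_power)
    have Pge: "P \<subseteq> {x. (gr, 1) \<bullet> x \<ge> mr}"
      unfolding P_def newton_polygon_def
    proof (rule hull_minimal)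
      show "convex {x. (gr, 1) \<bullet> x \<ge> mr}" by (rule convex_halfspace_ge)
      show "{(real (l ^ i), j) |i j. i \<le> n \<and> a i \<noteq> 0 \<and> real (order 0 (a i)) \<le> j}
            \<subseteq> {x. (gr, 1) \<bullet> x \<ge> mr}"
      proof clarify
        fix i j assume "i \<le> n" "a i \<noteq> 0" "real (order 0 (a i)) \<le> j"
        then have "m \<le> w i" using m_le by (simp add: J_def)
        then have "mr \<le> real_of_rat (w i)" by (simp add: mr_def of_rat_less_eq)
        then show "mr \<le> (gr, 1) \<bullet> (real (l ^ i), j)"
          using wr[of i] \<open>real (order 0 (a i)) \<le> j\<close> by (simp add: inner_Pair mult.commute)
      qed
    qed
    have face: "E face_of P" unfolding E_def
      by (rule face_of_Int_supporting_hyperplane_ge) (use Pge in \<open>auto simp: P_def newton_polygon_def\<close>)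
    define p where "p = (real (l ^ i), real (order 0 (a i)))"
    define q where "q = (real (l ^ k), real (order 0 (a k)))"
    have inE: "(real (l ^ j), real (order 0 (a j))) \<in> E" if "j \<in> I" for j
    proof -
      have "(real (l ^ j), real (order 0 (a j))) \<in> P"
        unfolding P_def newton_polygon_def using that
        by (intro hull_inc) (auto simp: I_def)
      moreover have "real_of_rat (w j) = mr" using that by (simp add: I_def mr_def)
      ultimately show ?thesis using wr[of j] by (simp add: E_def inner_Pair mult.commute)
    qed
    have pE: "p \<in> E" and qE: "q \<in> E" using inE ik by (auto simp: p_def q_def)
    have lik: "l ^ i \<noteq> l ^ k" using ik(3) assms(1) by (simp add: power_inject_exp)
    have fpq: "fst p \<noteq> fst q" using lik unfolding p_def q_def by (metis fst_conv of_nat_eq_iff)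
    then have "p \<noteq> q" by auto
    have "aff_dim E \<le> aff_dim {x :: real \<times> real. (gr, 1) \<bullet> x = mr}"
      by (rule aff_dim_subset) (auto simp: E_def)
    also have "\<dots> = 1" by (subst aff_dim_hyperplane) (auto simp: zero_prod_def)
    finally have a1: "aff_dim E \<le> 1" .
    have "1 = aff_dim {p, q}" using \<open>p \<noteq> q\<close> by simp
    also have "\<dots> \<le> aff_dim E" by (rule aff_dim_subset) (use pE qE in auto)
    finally have "aff_dim E = 1" using a1 by simp
    moreover have slope: "- gr = (snd q - snd p) / (fst q - fst p)"
    proof -
      have "real_of_rat (w i) = mr" "real_of_rat (w k) = mr" using ik by (auto simp: I_def mr_def)
      then have e: "real (order 0 (a i)) + real (l ^ i) * gr = real (order 0 (a k)) + real (l ^ k) * gr"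
        using wr by metis
      have "fst q - fst p \<noteq> 0" using fpq by simp
      then show ?thesis using e by (simp add: p_def q_def field_simps)
    qed
    ultimately have "- gr \<in> newton_slopes l n a"
      unfolding newton_slopes_def using face pE qE fpq by (auto simp: P_def)
    then have "real_of_rat g0 \<in> uminus ` newton_slopes l n a"
      by (metis gr_def image_eqI minus_minus)
    then have "f g0 = h g0" using H by blast
    then show False using dg0 by (simp add: d_def)
  qed
qed

end
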